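(* Consider Algorithm 1 instantiated with a locally computed procedure choose_leader. If choose_leader returns the same honest party at all honest parties for infinitely many rounds, then each honest party commits an unbounded number of blocks.
   Context: System model: $n$ parties $\Pi=\{p_1,\dots,p_n\}$, at most $f<n/3$ faulty. A party is crashed if it halts prematurely; Byzantine if it deviates from the protocol arbitrarily; honest if neither. Non-Byzantine parties follow the protocol until they (possibly) crash. Communication is eventually synchronous: there is an unknown global stabilization time (GST) after which every message arrives within a known bound $\delta$. Blocks: a block contains transactions, a link to a parent block (implied chain back to genesis), a round number, an author id, and a certificate from which a set of $2f+1$ endorsing parties can be obtained. certified$(B,r)$ is a local predicate saying $B$ has a valid certificate ($2f+1$ endorsements) for round $r$. $B\longrightarrow B'$ means $B$ is on $B'$'s implied chain. Committing a block commits its implied chain. LBR abstraction: each party can invoke $LBR(r,\ell)$; non-Byzantine parties endorse a block with round $r$ and author $\ell$ only by calling $LBR(r,\ell)$. Every invocation returns within $\Delta_l>c\delta$ time ($c$ an implementation constant) a block with round number $r'\le r$. Round $r$ has $k$ LBR-synchronized($\ell$) invocations if $k$ honest parties invoke $LBR(r,\ell)$ after GST and their execution intervals share a common intersection of length at least $c\delta$. Guarantees: (Endorsement) if certified$(B,r)$ then $B$'s endorser set has $2f+1$ parties; (Agreement) any two certified blocks returned to honest parties by LBR satisfy $B\longrightarrow B'$ or $B'\longrightarrow B$; (Progress) if round $r$ has $k\ge 2f+1$ LBR-synchronized($\ell$) invocations and $\ell$ is honest, they all return a certified block with round number $r$ authored by $\ell$; (Blocking) if a non-Byzantine $\ell$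 never invokes $LBR(r,\ell)$, no $LBR(r,\ell)$ invocation returns a certified block formed in round $r$; (Reputation) if a non-Byzantine $p$ never invokes LBR for round $r$, no certified block with round number $r$ has $p$ among its endorsers. Pacemaker: produces new_round$(r)$ notifications at honest parties for every $r$; if all new_round$(r)$ notifications at non-Byzantine parties occur after GST, the first at $T_f$ and last at $T_l$, then $T_l-T_f\le\delta$ and no non-Byzantine party receives new_round$(r+1)$ before $T_l+\Delta_p$, where $\Delta_p=\Delta_l$. Algorithm 1 (party $p_i$): initially commit_head $:=$ genesis. Upon new_round$(r)$: leader $:=$ choose_leader$(r,$ commit_head$)$ (a local computation returning a party in $\Pi$); $B:=LBR(r,\text{leader})$; if commit_head $\longrightarrow B$, commit $B$ (and all not-yet-committed blocks on its implied chain) and set commit_head $:=B$. *)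

theory Defs
  imports Complex_Main
begin

text \<open>System model for Algorithm 1 (abstract LBR + Pacemaker).
  Parties have a finite type 'p (n = card (UNIV :: 'p set)); blocks have a type 'b.\<close>

definition on_chain :: "('b \<Rightarrow> 'b) \<Rightarrow> 'b \<Rightarrow> 'b \<Rightarrow> bool" where
  "on_chain parent B B' \<longleftrightarrow> (\<exists>k. (parent ^^ k) B' = B)"

record ('p, 'b) execution =
  byz :: "'p set"
  crashed :: "'p set"
  fbound :: nat
  gst :: real
  delta :: real                         \<comment> \<open>message delay bound after GST\<close>
  cconst :: real                        \<comment> \<open>implementation constant c of LBR\<close>
  Delta_l :: real                       \<comment> \<open>LBR bound, also Delta_p = Delta_l\<close>
  genesis :: 'b
  parent :: "'b \<Rightarrow> 'b"
  rnd :: "'b \<Rightarrow> nat"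
  author :: "'b \<Rightarrow> 'p"
  endorsers :: "'b \<Rightarrow> 'p set"
  certified :: "'b \<Rightarrow> nat \<Rightarrow> bool"
  new_round :: "'p \<Rightarrow> nat \<Rightarrow> real option"  \<comment> \<open>time of new_round(r) at p, None if never\<close>
  choose_leader :: "nat \<Rightarrow> 'b \<Rightarrow> 'p"          \<comment> \<open>local computation choose_leader(r, commit_head)\<close>
  lbr_ret :: "'p \<Rightarrow> nat \<Rightarrow> 'b"              \<comment> \<open>block returned to honest p by its round-r LBR call\<close>

definition honest :: "('p, 'b, 'z) execution_scheme \<Rightarrow> 'p set" where
  "honest E = - (byz E \<union> crashed E)"

text \<open>commit_head of Algorithm 1 after processing rounds 1..r (from the returned blocks).\<close>
fun commit_head_seq :: "'b \<Rightarrow> ('b \<Rightarrow> 'b) \<Rightarrow> (nat \<Rightarrow> 'b) \<Rightarrow> nat \<Rightarrow> 'b" where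
  "commit_head_seq g par ret 0 = g"
| "commit_head_seq g par ret (Suc r) =
     (if on_chain par (commit_head_seq g par ret r) (ret (Suc r))
      then ret (Suc r) else commit_head_seq g par ret r)"

definition commit_head :: "('p, 'b, 'z) execution_scheme \<Rightarrow> 'p \<Rightarrow> nat \<Rightarrow> 'b" where
  "commit_head E p r = commit_head_seq (genesis E) (parent E) (lbr_ret E p) r"

text \<open>Leader used by p in round r (r \<ge> 1): computed from commit_head after round r-1.\<close>
definition leader :: "('p, 'b, 'z) execution_scheme \<Rightarrow> 'p \<Rightarrow> nat \<Rightarrow> 'p" where
  "leader E p r = choose_leader E r (commit_head E p (r - 1))"

definition committed :: "('p, 'b, 'z) execution_scheme \<Rightarrow> 'p \<Rightarrow> nat \<Rightarrow> 'b set" where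
  "committed E p r = {B. on_chain (parent E) B (commit_head E p r)}"

definition nr :: "('p, 'b, 'z) execution_scheme \<Rightarrow> 'p \<Rightarrow> nat \<Rightarrow> real" where
  "nr E p r = the (new_round E p r)"

definition system_model :: "('p::finite, 'b, 'z) execution_scheme \<Rightarrow> bool" where
  "system_model E \<longleftrightarrow>
     byz E \<inter> crashed E = {} \<and>
     card (byz E \<union> crashed E) \<le> fbound E \<and> 3 * fbound E < card (UNIV :: 'p set) \<and>
     delta E > 0 \<and> Delta_l E > cconst E * delta E \<and>
     parent E (genesis E) = genesis E \<and>
     (\<forall>B. B \<noteq> genesis E \<longrightarrow> rnd E (parent E B) < rnd E B)"

definition pacemaker :: "('p, 'b, 'z) execution_scheme \<Rightarrow> bool" where
  "pacemaker E \<longleftrightarrow>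
     (\<forall>p r. p \<in> honest E \<and> r \<ge> 1 \<longrightarrow> new_round E p r \<noteq> None) \<and>
     (\<forall>p T. p \<notin> byz E \<longrightarrow> finite {r. \<exists>t. new_round E p r = Some t \<and> t \<le> T}) \<and>
     (\<forall>r \<ge> 1.
        (\<forall>p t. p \<notin> byz E \<and> new_round E p r = Some t \<longrightarrow> gst E \<le> t) \<longrightarrow>
        ((\<forall>p q tp tq. p \<notin> byz E \<and> q \<notin> byz E \<and> new_round E p r = Some tp \<and>
              new_round E q r = Some tq \<longrightarrow> tq - tp \<le> delta E) \<and>
         (\<forall>p q tp t'. p \<notin> byz E \<and> q \<notin> byz E \<and> new_round E p r = Some tp \<and>
              new_round E q (Suc r) = Some t' \<longrightarrow> tp + Delta_l E \<le> t')))"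

definition lbr_guarantees :: "('p, 'b, 'z) execution_scheme \<Rightarrow> bool" where
  "lbr_guarantees E \<longleftrightarrow>
     \<comment> \<open>every honest invocation returns a (certified) block with round number \<le> r\<close>
     (\<forall>p r. p \<in> honest E \<and> r \<ge> 1 \<longrightarrow>
        rnd E (lbr_ret E p r) \<le> r \<and> certified E (lbr_ret E p r) (rnd E (lbr_ret E p r))) \<and>
     \<comment> \<open>Endorsement\<close>
     (\<forall>B r. certified E B r \<longrightarrow> card (endorsers E B) = 2 * fbound E + 1) \<and>
     \<comment> \<open>Agreement\<close>
     (\<forall>p q r r'. p \<in> honest E \<and> q \<in> honest E \<and> r \<ge> 1 \<and> r' \<ge> 1 \<and>
        certified E (lbr_ret E p r) (rnd E (lbr_ret E p r)) \<and>
        certified E (lbr_ret E q r') (rnd E (lbr_ret E q r')) \<longrightarrow>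
        on_chain (parent E) (lbr_ret E p r) (lbr_ret E q r') \<or>
        on_chain (parent E) (lbr_ret E q r') (lbr_ret E p r)) \<and>
     \<comment> \<open>Progress (execution interval of LBR(r) at p: from new_round(r) to new_round(r+1))\<close>
     (\<forall>r l S. r \<ge> 1 \<and> l \<in> honest E \<and> S \<subseteq> honest E \<and> card S \<ge> 2 * fbound E + 1 \<and>
        (\<forall>p\<in>S. leader E p r = l \<and> gst E \<le> nr E p r) \<and>
        (\<exists>a b. b - a \<ge> cconst E * delta E \<and>
               (\<forall>p\<in>S. nr E p r \<le> a \<and> b \<le> nr E p (Suc r))) \<longrightarrow>
        (\<forall>p\<in>S. certified E (lbr_ret E p r) r \<and> rnd E (lbr_ret E p r) = r \<and>
                author E (lbr_ret E p r) = l))"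

end

theory Submission
  imports Defs
begin

lemma chain_rnd:
  assumes "system_model E"
  shows "rnd E ((parent E ^^ k) B) \<le> rnd E B"
proof (induction k)
  case 0 then show ?case by simp
next
  case (Suc k)
  let ?x = "(parent E ^^ k) B"
  have "rnd E (parent E ?x) \<le> rnd E ?x"
  proof (cases "?x = genesis E")
    case True then show ?thesis using assms by (simp add: system_model_def)
  next
    case False then show ?thesis using assms unfolding system_model_def
      by (metis less_imp_le)
  qed
  then show ?case using Suc by simp
qed

lemma reach_genesis:
  assumes "system_model E"
  shows "\<exists>k. (parent E ^^ k) B = genesis E"
proof (induction "rnd E B" arbitrary: B rule: less_induct)
  case less
  show ?case
  proof (cases "B = genesis E")
    case True then show ?thesis by (metis funpow_0)
  next
    case False
    then have "rnd E (parent E B) < rnd E B" using assms by (simp add: system_model_def)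
    then obtain k where "(parent E ^^ k) (parent E B) = genesis E" using less by blast
    then have "(parent E ^^ Suc k) B = genesis E" by (simp add: funpow_Suc_right del: funpow.simps)
    then show ?thesis by blast
  qed
qed

lemma ch_form:
  "commit_head_seq g par ret r = g \<or>
   (\<exists>r'. 1 \<le> r' \<and> r' \<le> r \<and> commit_head_seq g par ret r = ret r')"
proof (induction r)
  case 0 then show ?case by simp
next
  case (Suc r) then show ?case by (auto intro: le_SucI)
qed

theorem lemma9:
  fixes E :: "('p::finite, 'b) execution"
  assumes "system_model E" and "pacemaker E" and "lbr_guarantees E"
    and "infinite {r. r \<ge> 1 \<and> (\<exists>l\<in>honest E. \<forall>q\<in>honest E. leader E q r = l)}"
    and "p \<in> honest E"
  shows "infinite (\<Union>r. committed E p r)"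
proof -
  note sm = assms(1)[unfolded system_model_def]
  note pm = assms(2)[unfolded pacemaker_def]
  note lg = assms(3)[unfolded lbr_guarantees_def]
  note pm1 = conjunct1[OF pm] and pm2 = conjunct1[OF conjunct2[OF pm]]
    and pm3 = conjunct2[OF conjunct2[OF pm]]
  note lg4 = conjunct2[OF conjunct2[OF conjunct2[OF lg]]]
  have L1: "\<And>q r. q \<in> honest E \<Longrightarrow> r \<ge> 1 \<Longrightarrow>
      rnd E (lbr_ret E q r) \<le> r \<and> certified E (lbr_ret E q r) (rnd E (lbr_ret E q r))"
    using conjunct1[OF lg] by blast
  have AG: "\<And>q q' r r'. q \<in> honest E \<Longrightarrow> q' \<in> honest E \<Longrightarrow> r \<ge> 1 \<Longrightarrow> r' \<ge> 1 \<Longrightarrow>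
        certified E (lbr_ret E q r) (rnd E (lbr_ret E q r)) \<Longrightarrow>
        certified E (lbr_ret E q' r') (rnd E (lbr_ret E q' r')) \<Longrightarrow>
        on_chain (parent E) (lbr_ret E q r) (lbr_ret E q' r') \<or>
        on_chain (parent E) (lbr_ret E q' r') (lbr_ret E q r)"
    using conjunct1[OF conjunct2[OF conjunct2[OF lg]]] by blast
  let ?G = "{r. r \<ge> 1 \<and> (\<exists>l\<in>honest E. \<forall>q\<in>honest E. leader E q r = l)}"
  let ?U = "\<Union>p\<in>{p. p \<notin> byz E}. {r. \<exists>t. new_round E p r = Some t \<and> t \<le> gst E}"
  have "finite ?U"
  proof (rule finite_UN_I)
    show "finite {p. p \<notin> byz E}" by simp
  next
    fix q assume "q \<in> {p. p \<notin> byz E}"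
    then have "q \<notin> byz E" by simp
    then show "finite {r. \<exists>t. new_round E q r = Some t \<and> t \<le> gst E}"
      by (rule pm2[rule_format])
  qed
  then obtain R where R0: "\<forall>r\<in>?U. r \<le> R"
    unfolding finite_nat_set_iff_bounded_le by (elim exE)
  have R: "\<And>r. r \<in> ?U \<Longrightarrow> r \<le> R" using R0 by (rule bspec)
  have late: "gst E \<le> t" if "r > R" "p' \<notin> byz E" "new_round E p' r = Some t" for r p' t
  proof (rule ccontr)
    assume "\<not> gst E \<le> t"
    then have "r \<in> {r. \<exists>t. new_round E p' r = Some t \<and> t \<le> gst E}" using that(3) by auto
    then have "r \<in> ?U" using that(2) by (intro UN_I) auto
    then have "r \<le> R" by (rule R)
    then show False using that(1) by simp
  qed
  have cardH: "card (honest E) \<ge> 2 * fbound E + 1"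
  proof -
    have "card (honest E) = card (UNIV :: 'p set) - card (byz E \<union> crashed E)"
      unfolding honest_def Compl_eq_Diff_UNIV by (rule card_Diff_subset) auto
    then show ?thesis using sm by linarith
  qed
  have finH: "finite (honest E)" by simp
  have neH: "honest E \<noteq> {}" using cardH by auto
  have Some_nr: "new_round E q r = Some (nr E q r)" if "q \<in> honest E" "r \<ge> 1" for q r
    using pm1 that unfolding nr_def by auto
  have good: "rnd E (commit_head E p r) = r" if rG: "r \<in> ?G" and rR: "r > R" for r
  proof -
    from rG obtain l where l: "l \<in> honest E" "\<forall>q\<in>honest E. leader E q r = l" and r1: "r \<ge> 1" by auto
    have pre: "\<forall>p t. p \<notin> byz E \<and> new_round E p r = Some t \<longrightarrow> gst E \<le> t"
      using late rR by blast
    have pmr: "\<forall>p q tp t'. p \<notin> byz E \<and> q \<notin> byz E \<and> new_round E p r = Some tp \<and>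
              new_round E q (Suc r) = Some t' \<longrightarrow> tp + Delta_l E \<le> t'"
      using conjunct2[OF pm3[rule_format, OF r1 pre[rule_format]]] .
    have hnb: "q \<notin> byz E" if "q \<in> honest E" for q using that unfolding honest_def by auto
    define a where "a = Max ((\<lambda>q. nr E q r) ` honest E)"
    define b where "b = a + Delta_l E"
    have a1: "nr E q r \<le> a" if "q \<in> honest E" for q unfolding a_def using finH that by simp
    have "a \<in> (\<lambda>q. nr E q r) ` honest E" unfolding a_def using finH neH by (intro Max_in) auto
    then obtain q0 where q0: "q0 \<in> honest E" "a = nr E q0 r" by blast
    have sr: "Suc r \<ge> 1" by simp
    have b1: "b \<le> nr E q (Suc r)" if "q \<in> honest E" for q
    proof -
      have "nr E q0 r + Delta_l E \<le> nr E q (Suc r)"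
        using pmr[rule_format, OF conjI[OF hnb[OF q0(1)] conjI[OF hnb[OF that]
          conjI[OF Some_nr[OF q0(1) r1] Some_nr[OF that sr]]]]] .
      then show ?thesis using q0(2) by (simp add: b_def)
    qed
    have gq: "gst E \<le> nr E q r" if "q \<in> honest E" for q
      using pre hnb[OF that] Some_nr[OF that r1] by blast
    have "b - a \<ge> cconst E * delta E" unfolding b_def using sm by simp
    then have "\<exists>a b. b - a \<ge> cconst E * delta E \<and>
               (\<forall>p\<in>honest E. nr E p r \<le> a \<and> b \<le> nr E p (Suc r))"
      using a1 b1 by blast
    then have prog: "certified E (lbr_ret E p r) r \<and> rnd E (lbr_ret E p r) = r"
    proof -
      have P: "\<forall>r l S. r \<ge> 1 \<and> l \<in> honest E \<and> S \<subseteq> honest E \<and> card S \<ge> 2 * fbound E + 1 \<and>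
        (\<forall>p\<in>S. leader E p r = l \<and> gst E \<le> nr E p r) \<and>
        (\<exists>a b. b - a \<ge> cconst E * delta E \<and>
               (\<forall>p\<in>S. nr E p r \<le> a \<and> b \<le> nr E p (Suc r))) \<longrightarrow>
        (\<forall>p\<in>S. certified E (lbr_ret E p r) r \<and> rnd E (lbr_ret E p r) = r \<and>
                author E (lbr_ret E p r) = l)" by (rule lg4)
      note P1 = spec[OF spec[OF spec[OF P, of r], of l], of "honest E"]
      have H: "r \<ge> 1 \<and> l \<in> honest E \<and> honest E \<subseteq> honest E \<and> card (honest E) \<ge> 2 * fbound E + 1 \<and>
        (\<forall>p\<in>honest E. leader E p r = l \<and> gst E \<le> nr E p r) \<and>
        (\<exists>a b. b - a \<ge> cconst E * delta E \<and>
               (\<forall>p\<in>honest E. nr E p r \<le> a \<and> b \<le> nr E p (Suc r)))"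
      proof (intro conjI)
        show "\<forall>p\<in>honest E. leader E p r = l \<and> gst E \<le> nr E p r" using l(2) gq by blast
      qed (use r1 l(1) cardH \<open>\<exists>a b. _\<close> in \<open>simp_all\<close>)
      have "\<forall>p\<in>honest E. certified E (lbr_ret E p r) r \<and> rnd E (lbr_ret E p r) = r \<and>
                author E (lbr_ret E p r) = l"
        using mp[OF P1 H] .
      then show ?thesis using assms(5) by blast
    qed
    obtain r0 where r0: "r = Suc r0" using r1 by (cases r) auto
    let ?ch = "commit_head_seq (genesis E) (parent E) (lbr_ret E p) r0"
    have "on_chain (parent E) ?ch (lbr_ret E p r)"
    proof (cases "?ch = genesis E")
      case True
      obtain k where "(parent E ^^ k) (lbr_ret E p r) = genesis E" using reach_genesis[OF assms(1)] by blast
      then show ?thesis using True unfolding on_chain_def by metis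
    next
      case False
      then obtain r' where r': "1 \<le> r'" "r' \<le> r0" "?ch = lbr_ret E p r'" using ch_form[of "genesis E" "parent E" "lbr_ret E p" r0] by blast
      have c': "rnd E (lbr_ret E p r') \<le> r' \<and> certified E (lbr_ret E p r') (rnd E (lbr_ret E p r'))"
        by (rule L1[OF assms(5) r'(1)])
      have c: "certified E (lbr_ret E p r) (rnd E (lbr_ret E p r))" using prog by simp
      have "on_chain (parent E) (lbr_ret E p r') (lbr_ret E p r) \<or>
            on_chain (parent E) (lbr_ret E p r) (lbr_ret E p r')"
        by (rule AG[OF assms(5) assms(5) r'(1) r1 conjunct2[OF c'] c])
      moreover have "\<not> on_chain (parent E) (lbr_ret E p r) (lbr_ret E p r')"
      proof
        assume "on_chain (parent E) (lbr_ret E p r) (lbr_ret E p r')"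
        then obtain k where "(parent E ^^ k) (lbr_ret E p r') = lbr_ret E p r"
          unfolding on_chain_def by blast
        then have "rnd E (lbr_ret E p r) \<le> rnd E (lbr_ret E p r')"
          using chain_rnd[OF assms(1), of k "lbr_ret E p r'"] by simp
        then show False using prog c' r' r0 by linarith
      qed
      ultimately show ?thesis using r' by simp
    qed
    then have "commit_head E p r = lbr_ret E p r"
      unfolding commit_head_def using r0 by simp
    then show ?thesis using prog by simp
  qed
  show ?thesis
  proof
    assume fin: "finite (\<Union>r. committed E p r)"
    then have "finite (rnd E ` (\<Union>r. committed E p r))" by simp
    then obtain M where M0: "\<forall>x\<in>rnd E ` (\<Union>r. committed E p r). x \<le> M"
      unfolding finite_nat_set_iff_bounded_le by (elim exE)
    have M: "\<And>x. x \<in> rnd E ` (\<Union>r. committed E p r) \<Longrightarrow> x \<le> M" using M0 by (rule bspec)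
    have "\<exists>n\<in>?G. n > max M R"
    proof (rule ccontr)
      assume A: "\<not> (\<exists>n\<in>?G. n > max M R)"
      have "?G \<subseteq> {..max M R}"
      proof
        fix x assume "x \<in> ?G"
        then have "\<not> x > max M R" using A by blast
        then show "x \<in> {..max M R}" by (simp add: not_less le_max_iff_disj)
      qed
      then have "finite ?G" by (rule finite_subset) simp
      then show False using assms(4) by contradiction
    qed
    then obtain r where r: "r > max M R" "r \<in> ?G" by blast
    have "(parent E ^^ 0) (commit_head E p r) = commit_head E p r" by simp
    then have "commit_head E p r \<in> committed E p r"
      unfolding committed_def on_chain_def by blast
    then have "rnd E (commit_head E p r) \<in> rnd E ` (\<Union>r. committed E p r)" by blast
    then have "rnd E (commit_head E p r) \<le> M" by (rule M)
    moreover have "rnd E (commit_head E p r) = r" using r(1) by (intro good[OF r(2)]) simp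
    ultimately show False using r by simp
  qed
qed

end
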